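(* Let $u\equiv 0\pmod{12}$ and $v\equiv 2,4\pmod 6$. Then $\Phi(u\times v,4,2)\le\left\lfloor\frac{u}{4}\left(\left\lfloor\frac{uv-1}{3}\left\lfloor\frac{uv-2}{2}\right\rfloor\right\rfloor-1\right)\right\rfloor-1$.
   Context: A 2-D $(u\times v,4,2)$-OOC is a family $\mathcal C$ of $u\times v$ $(0,1)$-matrices of Hamming weight $4$ such that for all $A=(a_{ij}),B=(b_{ij})\in\mathcal C$ and integers $r$ with $A\ne B$ or $r\not\equiv0\pmod v$, $\sum_{i,j}a_{ij}b_{i,j+r}\le 2$ (column indices mod $v$). $\Phi(u\times v,4,2)$ is the largest size of such a code. *)

theory Defs
  imports Complex_Main
begin

definition is01mat :: "nat \<Rightarrow> nat \<Rightarrow> (nat \<Rightarrow> nat \<Rightarrow> nat) \<Rightarrow> bool" where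
  "is01mat u v A \<longleftrightarrow>
     (\<forall>i j. A i j \<in> {0, 1}) \<and> (\<forall>i j. (i \<ge> u \<or> j \<ge> v) \<longrightarrow> A i j = 0)"

definition hweight :: "nat \<Rightarrow> nat \<Rightarrow> (nat \<Rightarrow> nat \<Rightarrow> nat) \<Rightarrow> nat" where
  "hweight u v A = (\<Sum>i<u. \<Sum>j<v. A i j)"

definition corr :: "nat \<Rightarrow> nat \<Rightarrow> (nat \<Rightarrow> nat \<Rightarrow> nat) \<Rightarrow> (nat \<Rightarrow> nat \<Rightarrow> nat) \<Rightarrow> int \<Rightarrow> nat" where
  "corr u v A B r = (\<Sum>i<u. \<Sum>j<v. A i j * B i (nat ((int j + r) mod int v)))"

definition is_OOC :: "nat \<Rightarrow> nat \<Rightarrow> (nat \<Rightarrow> nat \<Rightarrow> nat) set \<Rightarrow> bool" where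
  "is_OOC u v C \<longleftrightarrow>
     (\<forall>A\<in>C. is01mat u v A \<and> hweight u v A = 4) \<and>
     (\<forall>A\<in>C. \<forall>B\<in>C. \<forall>r::int. (A \<noteq> B \<or> \<not> (r mod int v = 0)) \<longrightarrow> corr u v A B r \<le> 2)"

definition Phi :: "nat \<Rightarrow> nat \<Rightarrow> nat" where
  "Phi u v = Max {card C | C. is_OOC u v C}"

end

theory Submission
  imports Defs
begin



lemma even_other:
  assumes "finite X" "even (card X)" "T \<in> X"
  shows "\<exists>T'\<in>X. T' \<noteq> T"
proof (rule ccontr)
  assume "\<not> ?thesis"
  then have "X = {T}" using assms(3) by blast
  then show False using assms(2) by simp
qed

lemma le2_eq:
  assumes "finite X" "card X \<le> 2" "a \<in> X" "b \<in> X" "a \<noteq> b"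
  shows "X = {a,b}"
proof (rule ccontr)
  assume "X \<noteq> {a,b}"
  then obtain c where c: "c \<in> X" "c \<noteq> a" "c \<noteq> b" using assms by blast
  have "{a,b,c} \<subseteq> X" using assms c by blast
  then have "card {a,b,c} \<le> card X" using assms(1) card_mono by blast
  moreover have "card {a,b,c} = 3" using c assms(5) by simp
  ultimately show False using assms(2) by simp
qed

lemma card4_eq:
  assumes "finite X" "card X = 4" "a \<in> X" "b \<in> X" "c \<in> X" "d \<in> X"
    "a \<noteq> b" "a \<noteq> c" "a \<noteq> d" "b \<noteq> c" "b \<noteq> d" "c \<noteq> d"
  shows "X = {a,b,c,d}"
proof -
  have "{a,b,c,d} \<subseteq> X" using assms by blast
  moreover have "card {a,b,c,d} = 4" using assms by simp
  ultimately show ?thesis using assms(1,2) card_subset_eq by metis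
qed

lemma card4_other:
  assumes "finite X" "card X = 4" "a \<in> X" "b \<in> X" "c \<in> X"
  shows "\<exists>d\<in>X. d \<noteq> a \<and> d \<noteq> b \<and> d \<noteq> c"
proof (rule ccontr)
  assume "\<not> ?thesis"
  then have "X \<subseteq> {a,b,c}" by blast
  then have "card X \<le> card {a,b,c}" by (simp add: card_mono)
  also have "\<dots> \<le> 3" by (simp add: card_insert_le_m1)
  finally show False using assms by simp
qed

lemma tri_ex:
  assumes "card T = 3" "x \<in> T" "y \<in> T" "x \<noteq> y"
  shows "\<exists>z. T = {x,y,z} \<and> z \<noteq> x \<and> z \<noteq> y"
proof -
  obtain a b c where T: "T = {a,b,c}" "a \<noteq> b" "b \<noteq> c" "a \<noteq> c"
    using assms(1) card_3_iff by metis
  show ?thesis using assms(2,3,4) T by auto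
qed

lemma tri_ex1:
  assumes "card T = 3" "x \<in> T"
  shows "\<exists>y z. T = {x,y,z} \<and> y \<noteq> x \<and> z \<noteq> x \<and> y \<noteq> z"
proof -
  obtain a b c where T: "T = {a,b,c}" "a \<noteq> b" "b \<noteq> c" "a \<noteq> c"
    using assms(1) card_3_iff by metis
  show ?thesis using assms(2) T by auto
qed




locale octa =
  fixes U :: "'a set set" and P :: "'a set" and \<sigma> :: "'a \<Rightarrow> 'a"
  assumes fin: "finite U"
    and tri: "\<And>T. T \<in> U \<Longrightarrow> card T = 3 \<and> T \<subseteq> P"
    and sP: "\<And>x. x \<in> P \<Longrightarrow> \<sigma> x \<in> P \<and> \<sigma> (\<sigma> x) = x \<and> \<sigma> x \<noteq> x"
    and cl: "\<And>T. T \<in> U \<Longrightarrow> \<sigma> ` T \<in> U"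
    and d4: "\<And>x. x \<in> P \<Longrightarrow> card {T\<in>U. x \<in> T} = 4"
    and ev: "\<And>x y. x \<in> P \<Longrightarrow> y \<in> P \<Longrightarrow> x \<noteq> y \<Longrightarrow> even (card {T\<in>U. x \<in> T \<and> y \<in> T})"
    and nz: "\<And>x. x \<in> P \<Longrightarrow> {T\<in>U. x \<in> T \<and> \<sigma> x \<in> T} \<noteq> {}"
begin

lemma finx: "finite {T\<in>U. x \<in> T}" using fin by simp
lemma finxy: "finite {T\<in>U. x \<in> T \<and> y \<in> T}" using fin by simp

lemma le2:
  assumes "x \<in> P" "y \<in> P" "x \<noteq> y"
  shows "card {T\<in>U. x \<in> T \<and> y \<in> T} \<le> 2"
proof (rule ccontr)
  assume a: "\<not> ?thesis"
  have sub: "{T\<in>U. x \<in> T \<and> y \<in> T} \<subseteq> {T\<in>U. x \<in> T}" by blast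
  have "card {T\<in>U. x \<in> T \<and> y \<in> T} \<le> 4" using card_mono[OF finx sub] d4[OF assms(1)] by simp
  moreover obtain k where "card {T\<in>U. x \<in> T \<and> y \<in> T} = 2*k" using ev[OF assms] by blast
  ultimately have "card {T\<in>U. x \<in> T \<and> y \<in> T} = 4"
  proof -
    assume h: "card {T\<in>U. x \<in> T \<and> y \<in> T} \<le> 4" "card {T\<in>U. x \<in> T \<and> y \<in> T} = 2*k"
    have "2*k \<le> 4" "\<not> 2*k \<le> 2" using h a by auto
    then have "k = 2" by linarith
    then show ?thesis using h by simp
  qed
  then have eq: "{T\<in>U. x \<in> T \<and> y \<in> T} = {T\<in>U. x \<in> T}"
    using card_subset_eq[OF finx sub] d4[OF assms(1)] by simp
  have "{T\<in>U. x \<in> T \<and> y \<in> T} \<noteq> {}"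
    using \<open>card {T\<in>U. x \<in> T \<and> y \<in> T} = 4\<close> by (metis card.empty zero_neq_numeral)
  then obtain T where T: "T \<in> U" "x \<in> T" "y \<in> T" by blast
  obtain z where z: "T = {x,y,z}" "z \<noteq> x" "z \<noteq> y" using tri_ex[of T x y] tri[OF T(1)] T assms(3) by blast
  have zP: "z \<in> P" using tri[OF T(1)] z by blast
  have "{T'\<in>U. x \<in> T' \<and> z \<in> T'} = {T}"
  proof
    show "{T} \<subseteq> {T'\<in>U. x \<in> T' \<and> z \<in> T'}" using T z by blast
    show "{T'\<in>U. x \<in> T' \<and> z \<in> T'} \<subseteq> {T}"
    proof
      fix T' assume T': "T' \<in> {T'\<in>U. x \<in> T' \<and> z \<in> T'}"
      then have "y \<in> T'" using eq by blast
      then have "T \<subseteq> T'" using T' z by blast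
      moreover have "card T' = 3" "card T = 3" using tri[of T'] tri[OF T(1)] T' by auto
      moreover have "finite T'" using \<open>card T' = 3\<close> card.infinite by fastforce
      ultimately have "T' = T" using card_subset_eq[of T' T] by simp
      then show "T' \<in> {T}" by simp
    qed
  qed
  then show False using ev[OF assms(1) zP] z(2) by simp
qed


lemma neqI: "x \<in> A \<Longrightarrow> x \<notin> B \<Longrightarrow> A \<noteq> B" by blast
lemma filtS: "X = {A,B,C,D} \<Longrightarrow> p \<in> T0 \<Longrightarrow> T0 \<in> {A,B,C,D} \<Longrightarrow>
   (\<forall>T\<in>{A,B,C,D}. p \<in> T \<longrightarrow> T = T0) \<Longrightarrow> {T\<in>X. p \<in> T} = {T0}" by blast
lemma subf: "{T\<in>U. x \<in> T \<and> y \<in> T} = {T\<in>{T\<in>U. x \<in> T}. y \<in> T}" by blast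
lemma neqI2: "x \<notin> A \<Longrightarrow> x \<in> B \<Longrightarrow> A \<noteq> B" by blast

lemma pair_sig:
  assumes "x \<in> P"
  shows "\<exists>w. w \<in> P \<and> w \<noteq> x \<and> w \<noteq> \<sigma> x \<and> \<sigma> w \<noteq> x \<and> \<sigma> w \<noteq> \<sigma> x \<and> \<sigma> w \<noteq> w \<and>
    {x, \<sigma> x, w} \<in> U \<and> {x, \<sigma> x, \<sigma> w} \<in> U \<and>
    {T\<in>U. x \<in> T \<and> \<sigma> x \<in> T} = {{x, \<sigma> x, w}, {x, \<sigma> x, \<sigma> w}}"
proof -
  have sx: "\<sigma> x \<in> P" "\<sigma> (\<sigma> x) = x" "\<sigma> x \<noteq> x" using sP[OF assms] by auto
  obtain T where T: "T \<in> U" "x \<in> T" "\<sigma> x \<in> T" using nz[OF assms] by blast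
  obtain w where w: "T = {x, \<sigma> x, w}" "w \<noteq> x" "w \<noteq> \<sigma> x"
    using tri_ex[of T x "\<sigma> x"] tri[OF T(1)] T sx(3) by metis
  have wP: "w \<in> P" using tri[OF T(1)] w by blast
  have sw: "\<sigma> w \<in> P" "\<sigma> (\<sigma> w) = w" "\<sigma> w \<noteq> w" using sP[OF wP] by auto
  have "\<sigma> ` T = {\<sigma> x, x, \<sigma> w}" using w sx by simp
  then have T2: "{x, \<sigma> x, \<sigma> w} \<in> U" using cl[OF T(1)] by (simp add: insert_commute)
  have n1: "\<sigma> w \<noteq> x" using sw w by metis
  have n2: "\<sigma> w \<noteq> \<sigma> x" using sw sx w by metis
  have ne: "{x, \<sigma> x, w} \<noteq> {x, \<sigma> x, \<sigma> w}" 
    by (rule neqI[of w]) (use n1 n2 sw w in auto)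
  have m1: "{x, \<sigma> x, w} \<in> {T\<in>U. x \<in> T \<and> \<sigma> x \<in> T}" using T w by simp
  have m2: "{x, \<sigma> x, \<sigma> w} \<in> {T\<in>U. x \<in> T \<and> \<sigma> x \<in> T}" using T2 by simp
  have "{T\<in>U. x \<in> T \<and> \<sigma> x \<in> T} = {{x, \<sigma> x, w}, {x, \<sigma> x, \<sigma> w}}"
    by (rule le2_eq[OF finxy le2[OF assms sx(1) sx(3)[symmetric]] m1 m2 ne])
  then show ?thesis using wP w n1 n2 sw T T2 by blast
qed

lemma contra:
  assumes bP: "b \<in> P"
  shows False
proof -
  define c where "c = \<sigma> b"
  have cP: "c \<in> P" "\<sigma> c = b" "c \<noteq> b" using sP[OF bP] c_def by auto
  obtain w where w: "w \<in> P" "w \<noteq> b" "w \<noteq> c" "\<sigma> w \<noteq> b" "\<sigma> w \<noteq> c" "\<sigma> w \<noteq> w"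
     "{b, c, w} \<in> U" "{b, c, \<sigma> w} \<in> U"
    using pair_sig[OF bP] c_def by blast
  define w' where "w' = \<sigma> w"
  have w'P: "w' \<in> P" "\<sigma> w' = w" using sP[OF w(1)] w'_def by auto
  note w = w[folded w'_def]
  have ww': "w \<noteq> w'" using w by auto
  have w'b: "w' \<noteq> b" using w by auto
  have Ub4: "card {T\<in>U. b \<in> T} = 4" using d4[OF bP] .
  have no3: "{b, w, w'} \<notin> U"
  proof
    assume T3: "{b, w, w'} \<in> U"
    obtain T4 where T4: "T4 \<in> {T\<in>U. b \<in> T}" "T4 \<noteq> {b,c,w}" "T4 \<noteq> {b,c,w'}" "T4 \<noteq> {b,w,w'}"
      using card4_other[OF finx Ub4, of "{b,c,w}" "{b,c,w'}" "{b,w,w'}"] w T3 by auto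
    have T4U: "T4 \<in> U" "b \<in> T4" using T4 by auto
    obtain y z where yz: "T4 = {b,y,z}" "y \<noteq> b" "z \<noteq> b" "y \<noteq> z" using tri_ex1[of T4 b] tri[OF T4U(1)] T4U(2) by blast
    have "\<exists>p\<in>T4. p \<noteq> b \<and> p \<noteq> c \<and> p \<noteq> w \<and> p \<noteq> w'"
    proof (rule ccontr)
      assume "\<not> ?thesis"
      then have "y \<in> {c,w,w'}" "z \<in> {c,w,w'}" using yz by auto
      then show False using yz T4(2,3,4) by (auto simp: insert_commute)
    qed
    then obtain p where p: "p \<in> T4" "p \<noteq> b" "p \<noteq> c" "p \<noteq> w" "p \<noteq> w'" by blast
    have pP: "p \<in> P" using tri[OF T4U(1)] p by blast
    have d1: "{b,c,w} \<noteq> {b,c,w'}" by (rule neqI[of w]) (use w ww' in auto)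
    have d2: "{b,c,w} \<noteq> {b,w,w'}" by (rule neqI[of c]) (use w ww' cP in auto)
    have d3: "{b,c,w'} \<noteq> {b,w,w'}" by (rule neqI[of c]) (use w ww' cP in auto)
    have "{T\<in>U. b \<in> T} = {{b,c,w}, {b,c,w'}, {b,w,w'}, T4}"
      by (rule card4_eq[OF finx Ub4]) (use w T3 T4 d1 d2 d3 in auto)
    then have "{T\<in>U. b \<in> T \<and> p \<in> T} = {T4}" unfolding subf
      by (rule filtS) (use p in auto)
    then show False using ev[OF bP pP p(2)[symmetric]] by simp
  qed
  have T1: "{b,c,w} \<in> {T\<in>U. b \<in> T \<and> w \<in> T}" using w by simp
  obtain T5 where T5: "T5 \<in> {T\<in>U. b \<in> T \<and> w \<in> T}" "T5 \<noteq> {b,c,w}"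
    using even_other[OF finxy ev[OF bP w(1) w(2)[symmetric]] T1] by blast
  have T5U: "T5 \<in> U" "b \<in> T5" "w \<in> T5" using T5 by auto
  obtain q where q: "T5 = {b,w,q}" "q \<noteq> b" "q \<noteq> w" using tri_ex[of T5 b w] tri[OF T5U(1)] T5U w(2) by metis
  have qc: "q \<noteq> c" using q T5 by (auto simp: insert_commute)
  have qw': "q \<noteq> w'" using q T5U no3 by auto
  have T2: "{b,c,w'} \<in> {T\<in>U. b \<in> T \<and> w' \<in> T}" using w by simp
  obtain T6 where T6: "T6 \<in> {T\<in>U. b \<in> T \<and> w' \<in> T}" "T6 \<noteq> {b,c,w'}"
    using even_other[OF finxy ev[OF bP w'P(1) w'b[symmetric]] T2] by blast
  have T6U: "T6 \<in> U" "b \<in> T6" "w' \<in> T6" using T6 by auto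
  obtain q' where q': "T6 = {b,w',q'}" "q' \<noteq> b" "q' \<noteq> w'" using tri_ex[of T6 b w'] tri[OF T6U(1)] T6U w'b by metis
  have q'c: "q' \<noteq> c" using q' T6 by (auto simp: insert_commute)
  have q'w: "q' \<noteq> w" using q' T6U no3 by (auto simp: insert_commute)
  have e1: "{b,c,w} \<noteq> {b,c,w'}" by (rule neqI[of w]) (use w ww' in auto)
  have e2: "{b,c,w} \<noteq> T5" using T5 by auto
  have e3: "{b,c,w} \<noteq> T6" by (rule neqI[of w]) (use w ww' q' q'w in auto)
  have e4: "{b,c,w'} \<noteq> T5" by (rule neqI[of w']) (use w ww' q qw' in auto)
  have e5: "{b,c,w'} \<noteq> T6" using T6 by auto
  have e6: "T5 \<noteq> T6" by (rule neqI[of w]) (use w ww' q q' q'w in auto)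
  have Ub: "{T\<in>U. b \<in> T} = {{b,c,w}, {b,c,w'}, T5, T6}"
    by (rule card4_eq[OF finx Ub4]) (use w T5U T6U e1 e2 e3 e4 e5 e6 in auto)
  have qP: "q \<in> P" using tri[OF T5U(1)] q by blast
  have qq': "q = q'"
  proof (rule ccontr)
    assume nq: "q \<noteq> q'"
    have "{T\<in>U. b \<in> T \<and> q \<in> T} = {T5}" unfolding subf
      by (rule filtS[OF Ub]) (use q q' qc qw' nq in auto)
    then show False using ev[OF bP qP q(2)[symmetric]] by simp
  qed
  define d where "d = \<sigma> q"
  have dP: "d \<in> P" "\<sigma> d = q" "d \<noteq> q" using sP[OF qP] d_def by auto
  have db: "d \<noteq> b" using dP(2) c_def qc by metis
  have dw: "d \<noteq> w" using dP(2) qw' w'_def by metis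
  have dw': "d \<noteq> w'" using dP(2) w'P(2) q(3) by metis
  have dc: "d \<noteq> c" using dP(2) cP(2) q(2) by metis
  obtain s where s: "s \<in> P" "s \<noteq> q" "s \<noteq> d" "\<sigma> s \<noteq> q" "\<sigma> s \<noteq> d" "\<sigma> s \<noteq> s"
     "{q, d, s} \<in> U" "{q, d, \<sigma> s} \<in> U"
    using pair_sig[OF qP] d_def by blast
  have Uq4: "card {T\<in>U. q \<in> T} = 4" using d4[OF qP] .
  have f1: "T5 \<noteq> T6" by (fact e6)
  have f2: "T5 \<noteq> {q,d,s}" by (rule neqI2[of d]) (use q db dw dP in auto)
  have f3: "T5 \<noteq> {q,d,\<sigma> s}" by (rule neqI2[of d]) (use q db dw dP in auto)
  have f4: "T6 \<noteq> {q,d,s}" by (rule neqI2[of d]) (use q' qq' db dw' dP in auto)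
  have f5: "T6 \<noteq> {q,d,\<sigma> s}" by (rule neqI2[of d]) (use q' qq' db dw' dP in auto)
  have f6: "{q,d,s} \<noteq> {q,d,\<sigma> s}" by (rule neqI[of s]) (use s in auto)
  have Uq: "{T\<in>U. q \<in> T} = {T5, T6, {q,d,s}, {q,d,\<sigma> s}}"
    by (rule card4_eq[OF finx Uq4]) (use T5U T6U q q' qq' s f1 f2 f3 f4 f5 f6 in auto)
  have T5q: "T5 \<in> {T\<in>U. q \<in> T \<and> w \<in> T}" using T5U q by auto
  obtain T' where T': "T' \<in> {T\<in>U. q \<in> T \<and> w \<in> T}" "T' \<noteq> T5"
    using even_other[OF finxy ev[OF qP w(1) q(3)] T5q] by blast
  have T9: "{q,d,w} \<in> U"
  proof -
    have "T' \<in> {T\<in>U. q \<in> T}" using T' by simp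
    then have "T' \<in> {T5, T6, {q,d,s}, {q,d,\<sigma> s}}" using Uq by simp
    moreover have "w \<notin> T6" using q' qq' ww' q w by auto
    moreover have "w \<in> T'" using T' by simp
    ultimately have "T' = {q,d,s} \<or> T' = {q,d,\<sigma> s}" using T'(2) by blast
    then show ?thesis
    proof
      assume "T' = {q,d,s}"
      then have "w = s" using \<open>w \<in> T'\<close> q(3) dw by simp
      then show ?thesis using s(7) by simp
    next
      assume "T' = {q,d,\<sigma> s}"
      then have "w = \<sigma> s" using \<open>w \<in> T'\<close> q(3) dw by simp
      then show ?thesis using s(8) by simp
    qed
  qed
  obtain T10 where T10: "T10 \<in> U" "w \<in> T10" "w' \<in> T10" using nz[OF w(1)] w'_def by blast
  obtain z where z: "T10 = {w,w',z}" "z \<noteq> w" "z \<noteq> w'" using tri_ex[of T10 w w'] tri[OF T10(1)] T10 ww' by metis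
  have Uw4: "card {T\<in>U. w \<in> T} = 4" using d4[OF w(1)] .
  have g1: "{b,c,w} \<noteq> T5" by (fact e2)
  have g2: "{b,c,w} \<noteq> {q,d,w}" by (rule neqI[of b]) (use q db w in auto)
  have g3: "{b,c,w} \<noteq> T10" by (rule neqI2[of w']) (use z w ww' in auto)
  have g4: "T5 \<noteq> {q,d,w}" by (rule neqI[of b]) (use q db w in auto)
  have g5: "T5 \<noteq> T10" by (rule neqI2[of w']) (use z q qw' w ww' in auto)
  have g6: "{q,d,w} \<noteq> T10" by (rule neqI2[of w']) (use z qw' dw' ww' in auto)
  have Uw: "{T\<in>U. w \<in> T} = {{b,c,w}, T5, {q,d,w}, T10}"
    by (rule card4_eq[OF finx Uw4]) (use w T5U T9 T10 g1 g2 g3 g4 g5 g6 in auto)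
  show False
  proof (cases "z = c")
    case False
    have "{T\<in>U. w \<in> T \<and> c \<in> T} = {{b,c,w}}" unfolding subf
    proof (rule filtS[OF Uw])
      have "c \<notin> T5" using q(1) qc cP(3) w(3) by simp
      moreover have "c \<notin> {q,d,w}" using qc dc w(3) by auto
      moreover have "c \<notin> T10" using z(1) False w(3) w(5) by auto
      ultimately show "\<forall>T\<in>{{b, c, w}, T5, {q, d, w}, T10}. c \<in> T \<longrightarrow> T = {b, c, w}" by blast
    qed simp_all
    then show ?thesis using ev[OF w(1) cP(1) w(3)] by simp
  next
    case True
    have "{T\<in>U. w \<in> T \<and> d \<in> T} = {{q,d,w}}" unfolding subf
    proof (rule filtS[OF Uw])
      have "d \<notin> T5" using q(1) db dw dP(3) by auto
      moreover have "d \<notin> {b,c,w}" using db dc dw by auto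
      moreover have "d \<notin> T10" using z(1) True dw dw' dc by auto
      ultimately show "\<forall>T\<in>{{b, c, w}, T5, {q, d, w}, T10}. d \<in> T \<longrightarrow> T = {q, d, w}" by blast
    qed simp_all
    then show ?thesis using ev[OF w(1) dP(1) dw[symmetric]] by simp
  qed
qed
end



lemma even_invol:
  assumes "finite S" "\<And>x. x \<in> S \<Longrightarrow> f x \<in> S \<and> f x \<noteq> x \<and> f (f x) = x"
  shows "even (card S)"
  using assms
proof (induction "card S" arbitrary: S rule: less_induct)
  case less
  show ?case
  proof (cases "S = {}")
    case True then show ?thesis by simp
  next
    case False
    then obtain x where x: "x \<in> S" by blast
    have fx: "f x \<in> S" "f x \<noteq> x" "f (f x) = x" using less.prems(2)[OF x] by auto
    define S' where "S' = S - {x, f x}"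
    have cS: "card S = card S' + 2"
    proof -
      have "{x, f x} \<subseteq> S" using x fx by simp
      then have "card S' = card S - card {x, f x}" unfolding S'_def
        using less.prems(1) by (simp add: card_Diff_subset finite_subset)
      moreover have "card {x, f x} = 2" using fx by simp
      moreover have "card {x, f x} \<le> card S" using \<open>{x, f x} \<subseteq> S\<close> less.prems(1) card_mono by blast
      ultimately show ?thesis by simp
    qed
    have "even (card S')"
    proof (rule less.hyps)
      show "card S' < card S" using cS by simp
      show "finite S'" using less.prems(1) S'_def by simp
      fix y assume y: "y \<in> S'"
      then have yS: "y \<in> S" "y \<noteq> x" "y \<noteq> f x" unfolding S'_def by auto
      have fy: "f y \<in> S" "f y \<noteq> y" "f (f y) = y" using less.prems(2)[OF yS(1)] by auto
      have "f y \<noteq> x" using fy yS fx by metis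
      moreover have "f y \<noteq> f x" using fy yS fx by metis
      ultimately show "f y \<in> S' \<and> f y \<noteq> y \<and> f (f y) = y" using fy S'_def by auto
    qed
    then show ?thesis using cS by simp
  qed
qed

lemma cnt:
  assumes "finite X" "Q \<subseteq> X" "card Q \<le> 3"
  shows "card {T. T \<subseteq> X \<and> card T = 3 \<and> Q \<subseteq> T} = (card X - card Q) choose (3 - card Q)"
proof -
  have fQ: "finite Q" using assms finite_subset by blast
  have "bij_betw (\<lambda>T. T - Q) {T. T \<subseteq> X \<and> card T = 3 \<and> Q \<subseteq> T} {S. S \<subseteq> X - Q \<and> card S = 3 - card Q}"
  proof (rule bij_betw_byWitness[where f' = "\<lambda>S. S \<union> Q"])
    show "\<forall>a\<in>{T. T \<subseteq> X \<and> card T = 3 \<and> Q \<subseteq> T}. a - Q \<union> Q = a" by auto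
    show "\<forall>a'\<in>{S. S \<subseteq> X - Q \<and> card S = 3 - card Q}. a' \<union> Q - Q = a'" by auto
    show "(\<lambda>T. T - Q) ` {T. T \<subseteq> X \<and> card T = 3 \<and> Q \<subseteq> T} \<subseteq> {S. S \<subseteq> X - Q \<and> card S = 3 - card Q}"
    proof clarify
      fix T assume T: "T \<subseteq> X" "card T = 3" "Q \<subseteq> T"
      show "T - Q \<subseteq> X - Q \<and> card (T - Q) = 3 - card Q"
        using T fQ by (auto simp: card_Diff_subset)
    qed
    show "(\<lambda>S. S \<union> Q) ` {S. S \<subseteq> X - Q \<and> card S = 3 - card Q} \<subseteq> {T. T \<subseteq> X \<and> card T = 3 \<and> Q \<subseteq> T}"
    proof clarify
      fix S assume S: "S \<subseteq> X - Q" "card S = 3 - card Q"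
      have fS: "finite S" using S assms(1) finite_subset by blast
      have "card (S \<union> Q) = card S + card Q" using S fS fQ by (subst card_Un_disjoint) auto
      then show "S \<union> Q \<subseteq> X \<and> card (S \<union> Q) = 3 \<and> Q \<subseteq> S \<union> Q" using S assms by auto
    qed
  qed
  then have "card {T. T \<subseteq> X \<and> card T = 3 \<and> Q \<subseteq> T} = card {S. S \<subseteq> X - Q \<and> card S = 3 - card Q}"
    by (rule bij_betw_same_card)
  also have "\<dots> = card (X - Q) choose (3 - card Q)" using assms(1) by (simp add: n_subsets)
  also have "card (X - Q) = card X - card Q" using assms fQ by (simp add: card_Diff_subset)
  finally show ?thesis .
qed

lemma modeq:
  fixes j t c v :: nat
  assumes "j < v" "t < v" "c < v"
  shows "((j + t) mod v = c) = (j = (c + v - t) mod v)"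
proof -
  have a: "(j + t) mod v = (if j + t < v then j + t else j + t - v)"
    using assms by (simp add: mod_if le_mod_geq)
  have b: "(c + v - t) mod v = (if c + v - t < v then c + v - t else c + v - t - v)"
    using assms by (simp add: mod_if le_mod_geq)
  show ?thesis unfolding a b using assms by auto
qed




definition sh :: "nat \<Rightarrow> nat \<Rightarrow> nat \<times> nat \<Rightarrow> nat \<times> nat" where
  "sh v t p = (fst p, (snd p + t) mod v)"

lemma c32: "(3::nat) choose 2 = 3" by (simp add: choose_two)

lemma N_mod3:
  fixes n :: nat
  assumes "3 dvd n" "n \<ge> 3"
  shows "((n - 1) choose 2) mod 3 = 1"
proof -
  obtain m where m: "n = 3 * m" using assms(1) by (auto elim: dvdE)
  then have "m \<noteq> 0" using assms(2) by auto
  then have k: "n = 3 * (m - 1) + 3" using m by (cases m) auto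
  define k where "k = m - 1"
  note k = k[folded k_def]
  have "even (k * (k + 1))" by simp
  then obtain j where j: "k * (k + 1) = 2 * j" by (rule evenE)
  have "(n - 1) choose 2 = (3*k+2) * (3*k+1) div 2" using k by (simp add: choose_two)
  also have "(3*k+2) * (3*k+1) = 9 * (k * (k+1)) + 2" by (simp add: algebra_simps)
  also have "\<dots> = 2 * (9 * j + 1)" using j by simp
  finally have "(n - 1) choose 2 = 9 * j + 1" by simp
  moreover have "(9 * j + 1) mod 3 = (1::nat)" by presburger
  ultimately show ?thesis by simp
qed

locale frame =
  fixes u v :: nat and F :: "(nat \<times> nat) set set"
  assumes vpos: "v > 0" and upos: "u > 0"
    and Fsub: "\<And>D. D \<in> F \<Longrightarrow> D \<subseteq> {..<u} \<times> {..<v} \<and> card D = 4"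
    and Finter: "\<And>D E s t. D \<in> F \<Longrightarrow> E \<in> F \<Longrightarrow> s < v \<Longrightarrow> t < v \<Longrightarrow> D \<noteq> E \<or> s \<noteq> t \<Longrightarrow>
        card (sh v s ` D \<inter> sh v t ` E) \<le> 2"
begin

definition "P = {..<u} \<times> {..<v}"
definition "Bl = F \<times> {..<v}"
definition "blk b = sh v (snd b) ` fst b"
definition "cov = {T. \<exists>b\<in>Bl. T \<subseteq> blk b \<and> card T = 3}"
definition "UU = {T. T \<subseteq> P \<and> card T = 3 \<and> T \<notin> cov}"
definition "lam Q = card {b\<in>Bl. Q \<subseteq> blk b}"

lemma finP: "finite P" unfolding P_def by simp
lemma cardP: "card P = u * v" unfolding P_def by (simp add: card_cartesian_product)
lemma finF: "finite F"
proof -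
  have "F \<subseteq> Pow P" using Fsub unfolding P_def by blast
  then show ?thesis using finP finite_subset by blast
qed
lemma finBl: "finite Bl" unfolding Bl_def using finF by simp

lemma sh_P: "p \<in> P \<Longrightarrow> sh v t p \<in> P"
  unfolding P_def sh_def using vpos by (auto simp: mem_Times_iff)

lemma sh_inj: assumes "t < v" shows "inj_on (sh v t) P"
proof
  fix p q assume p: "p \<in> P" and q: "q \<in> P" and e: "sh v t p = sh v t q"
  have 1: "fst p = fst q" using e unfolding sh_def by simp
  have 2: "(snd p + t) mod v = (snd q + t) mod v" using e unfolding sh_def by simp
  have lt: "snd p < v" "snd q < v" using p q unfolding P_def by (auto simp: mem_Times_iff)
  have c: "(snd q + t) mod v < v" using vpos by simp
  have "snd p = ((snd q + t) mod v + v - t) mod v" using modeq[OF lt(1) assms c] 2 by simp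
  moreover have "snd q = ((snd q + t) mod v + v - t) mod v" using modeq[OF lt(2) assms c] by simp
  ultimately have "snd p = snd q" by simp
  with 1 show "p = q" by (simp add: prod_eq_iff)
qed

lemma blk_props: assumes "b \<in> Bl" shows "blk b \<subseteq> P" "card (blk b) = 4"
proof -
  have D: "fst b \<in> F" "snd b < v" using assms unfolding Bl_def by (auto simp: mem_Times_iff)
  have DP: "fst b \<subseteq> P" using Fsub[OF D(1)] unfolding P_def by simp
  show "blk b \<subseteq> P" unfolding blk_def using DP sh_P by blast
  show "card (blk b) = 4" unfolding blk_def
    using card_image[OF inj_on_subset[OF sh_inj[OF D(2)] DP]] Fsub[OF D(1)] by simp
qed

lemma blk_inter: assumes "b \<in> Bl" "b' \<in> Bl" "b \<noteq> b'" shows "card (blk b \<inter> blk b') \<le> 2"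
proof -
  have D: "fst b \<in> F" "snd b < v" "fst b' \<in> F" "snd b' < v" using assms unfolding Bl_def by (auto simp: mem_Times_iff)
  have "fst b \<noteq> fst b' \<or> snd b \<noteq> snd b'" using assms(3) by (simp add: prod_eq_iff)
  then show ?thesis unfolding blk_def using Finter[OF D(1) D(3) D(2) D(4)] by simp
qed

lemma cov_uniq:
  assumes "b \<in> Bl" "b' \<in> Bl" "T \<subseteq> blk b" "T \<subseteq> blk b'" "card T = 3"
  shows "b = b'"
proof (rule ccontr)
  assume "b \<noteq> b'"
  then have "card (blk b \<inter> blk b') \<le> 2" using blk_inter assms by blast
  moreover have "card T \<le> card (blk b \<inter> blk b')"
  proof (rule card_mono)
    show "finite (blk b \<inter> blk b')" using blk_props(1)[OF assms(1)] finP finite_subset by blast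
  qed (use assms in blast)
  ultimately show False using assms(5) by simp
qed

lemma count_cov:
  assumes "Q \<subseteq> P" "card Q \<le> 3"
  shows "card {T\<in>cov. Q \<subseteq> T} = ((4 - card Q) choose (3 - card Q)) * lam Q"
proof -
  have eq: "{T\<in>cov. Q \<subseteq> T} = (\<Union>b\<in>{b\<in>Bl. Q \<subseteq> blk b}. {T. T \<subseteq> blk b \<and> card T = 3 \<and> Q \<subseteq> T})"
    unfolding cov_def by blast
  have "card (\<Union>b\<in>{b\<in>Bl. Q \<subseteq> blk b}. {T. T \<subseteq> blk b \<and> card T = 3 \<and> Q \<subseteq> T})
      = (\<Sum>b\<in>{b\<in>Bl. Q \<subseteq> blk b}. card {T. T \<subseteq> blk b \<and> card T = 3 \<and> Q \<subseteq> T})"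
  proof (rule card_UN_disjoint)
    show "finite {b\<in>Bl. Q \<subseteq> blk b}" using finBl by simp
    show "\<forall>b\<in>{b\<in>Bl. Q \<subseteq> blk b}. finite {T. T \<subseteq> blk b \<and> card T = 3 \<and> Q \<subseteq> T}"
    proof
      fix b assume "b \<in> {b\<in>Bl. Q \<subseteq> blk b}"
      then have "finite (blk b)" using blk_props finP finite_subset by blast
      then show "finite {T. T \<subseteq> blk b \<and> card T = 3 \<and> Q \<subseteq> T}" by simp
    qed
    show "\<forall>b\<in>{b\<in>Bl. Q \<subseteq> blk b}. \<forall>b'\<in>{b\<in>Bl. Q \<subseteq> blk b}. b \<noteq> b' \<longrightarrow>
        {T. T \<subseteq> blk b \<and> card T = 3 \<and> Q \<subseteq> T} \<inter> {T. T \<subseteq> blk b' \<and> card T = 3 \<and> Q \<subseteq> T} = {}"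
      using cov_uniq by blast
  qed
  also have "\<dots> = (\<Sum>b\<in>{b\<in>Bl. Q \<subseteq> blk b}. (4 - card Q) choose (3 - card Q))"
  proof (rule sum.cong)
    fix b assume b: "b \<in> {b\<in>Bl. Q \<subseteq> blk b}"
    then have "finite (blk b)" using blk_props finP finite_subset by blast
    then show "card {T. T \<subseteq> blk b \<and> card T = 3 \<and> Q \<subseteq> T} = (4 - card Q) choose (3 - card Q)"
      using cnt[of "blk b" Q] b assms blk_props by simp
  qed simp
  also have "\<dots> = ((4 - card Q) choose (3 - card Q)) * lam Q" unfolding lam_def by simp
  finally show ?thesis using eq by simp
qed

lemma count_UU:
  assumes "Q \<subseteq> P" "card Q \<le> 3"
  shows "card {T\<in>UU. Q \<subseteq> T} + ((4 - card Q) choose (3 - card Q)) * lam Q = (u * v - card Q) choose (3 - card Q)"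
proof -
  have eq: "{T. T \<subseteq> P \<and> card T = 3 \<and> Q \<subseteq> T} = {T\<in>UU. Q \<subseteq> T} \<union> {T\<in>cov. Q \<subseteq> T}"
    unfolding UU_def cov_def using blk_props by blast
  have fin: "finite {T. T \<subseteq> P \<and> card T = 3 \<and> Q \<subseteq> T}" using finP by simp
  have "card {T. T \<subseteq> P \<and> card T = 3 \<and> Q \<subseteq> T} = card {T\<in>UU. Q \<subseteq> T} + card {T\<in>cov. Q \<subseteq> T}"
    unfolding eq
    by (rule card_Un_disjoint) (use fin eq UU_def in \<open>auto intro: finite_subset\<close>)
  moreover have "card {T. T \<subseteq> P \<and> card T = 3 \<and> Q \<subseteq> T} = (u * v - card Q) choose (3 - card Q)"
    using cnt[OF finP assms] cardP by simp
  ultimately show ?thesis using count_cov[OF assms] by simp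
qed


lemma sh_comp: "sh v h (sh v t p) = sh v ((t + h) mod v) p"
  unfolding sh_def by (simp add: mod_simps add.assoc)

lemma mem_P: "p \<in> P \<longleftrightarrow> fst p < u \<and> snd p < v"
  unfolding P_def by (auto simp: mem_Times_iff)

lemma rowsum:
  assumes c: "c < v"
  shows "(\<Sum>i<u. lam {(i,c)}) = 4 * card F"
proof -
  define S where "S i = {b\<in>Bl. {(i,c)} \<subseteq> blk b}" for i
  have "(\<Sum>i<u. lam {(i,c)}) = (\<Sum>i<u. card (S i))" unfolding lam_def S_def by simp
  also have "\<dots> = card (Sigma {..<u} S)"
    by (rule card_SigmaI[symmetric]) (use finBl S_def in auto)
  also have "\<dots> = card (Sigma F (\<lambda>D. D))"
  proof (rule bij_betw_same_card)
    show "bij_betw (\<lambda>(i,b). (fst b, (i, (c + v - snd b) mod v))) (Sigma {..<u} S) (Sigma F (\<lambda>D. D))"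
    proof (rule bij_betw_byWitness[where f' = "\<lambda>(D,p). (fst p, (D, (c + v - snd p) mod v))"])
      show "\<forall>a\<in>Sigma {..<u} S. (\<lambda>(D,p). (fst p, (D, (c + v - snd p) mod v))) ((\<lambda>(i,b). (fst b, (i, (c + v - snd b) mod v))) a) = a"
      proof
        fix a assume a: "a \<in> Sigma {..<u} S"
        obtain i D t where at: "a = (i,(D,t))" by (metis prod.collapse)
        have t: "t < v" using a at unfolding S_def Bl_def by (auto simp: mem_Times_iff)
        have "(c + v - (c + v - t) mod v) mod v = t"
        proof -
          have lt: "(c + v - t) mod v < v" using vpos by simp
          show ?thesis using modeq[OF lt t c] modeq[OF t lt c]
            by (metis add.commute modeq[OF lt t c] mod_mod_trivial)
        qed
        then show "(\<lambda>(D,p). (fst p, (D, (c + v - snd p) mod v))) ((\<lambda>(i,b). (fst b, (i, (c + v - snd b) mod v))) a) = a"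
          using at by simp
      qed
      show "\<forall>a\<in>Sigma F (\<lambda>D. D). (\<lambda>(i,b). (fst b, (i, (c + v - snd b) mod v))) ((\<lambda>(D,p). (fst p, (D, (c + v - snd p) mod v))) a) = a"
      proof
        fix a assume a: "a \<in> Sigma F (\<lambda>D. D)"
        obtain D i j where at: "a = (D,(i,j))" by (metis prod.collapse)
        have j: "j < v" using a at Fsub by (auto simp: mem_Times_iff)
        have lt: "(c + v - j) mod v < v" using vpos by simp
        have "(c + v - (c + v - j) mod v) mod v = j"
          by (metis add.commute modeq[OF lt j c] modeq[OF j lt c])
        then show "(\<lambda>(i,b). (fst b, (i, (c + v - snd b) mod v))) ((\<lambda>(D,p). (fst p, (D, (c + v - snd p) mod v))) a) = a"
          using at by simp
      qed
      show "(\<lambda>(i,b). (fst b, (i, (c + v - snd b) mod v))) ` Sigma {..<u} S \<subseteq> Sigma F (\<lambda>D. D)"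
      proof (rule image_subsetI)
        fix a assume a: "a \<in> Sigma {..<u} S"
        obtain i D t where at: "a = (i,(D,t))" by (metis prod.collapse)
        from a at have "i \<in> {..<u}" "(D,t) \<in> S i" by auto
        then have h: "D \<in> F" "t < v" "(i,c) \<in> sh v t ` D" unfolding S_def Bl_def blk_def by auto
        then obtain p where p: "p \<in> D" "sh v t p = (i,c)" by auto
        have pv: "snd p < v" "fst p = i" using p Fsub[OF h(1)] unfolding sh_def by (auto simp: mem_Times_iff)
        have "(snd p + t) mod v = c" using p(2) unfolding sh_def by simp
        then have "snd p = (c + v - t) mod v" using modeq[OF pv(1) h(2) c] by simp
        then have "p = (i, (c + v - t) mod v)" using pv by (simp add: prod_eq_iff)
        then show "(\<lambda>(i,b). (fst b, (i, (c + v - snd b) mod v))) a \<in> Sigma F (\<lambda>D. D)" using p h at by simp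
      qed
      show "(\<lambda>(D,p). (fst p, (D, (c + v - snd p) mod v))) ` Sigma F (\<lambda>D. D) \<subseteq> Sigma {..<u} S"
      proof (rule image_subsetI)
        fix a assume a: "a \<in> Sigma F (\<lambda>D. D)"
        obtain D i j where at: "a = (D,(i,j))" by (metis prod.collapse)
        from a at have h: "D \<in> F" "(i,j) \<in> D" by auto
        have ij: "i < u" "j < v" using h Fsub by (auto simp: mem_Times_iff)
        have lt: "(c + v - j) mod v < v" using vpos by simp
        have "(j + (c + v - j) mod v) mod v = c"
          by (metis modeq[OF ij(2) lt c] add.commute modeq[OF lt ij(2) c])
        then have "sh v ((c + v - j) mod v) (i,j) = (i,c)" unfolding sh_def by simp
        then have "(i,c) \<in> blk (D, (c + v - j) mod v)" unfolding blk_def using h by force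
        then show "(\<lambda>(D,p). (fst p, (D, (c + v - snd p) mod v))) a \<in> Sigma {..<u} S"
          unfolding S_def Bl_def using ij h lt at by simp
      qed
    qed
  qed
  also have "\<dots> = (\<Sum>D\<in>F. card D)"
  proof (rule card_SigmaI)
    show "\<forall>a\<in>F. finite a"
    proof
      fix D assume "D \<in> F"
      then have "D \<subseteq> {..<u} \<times> {..<v}" using Fsub by blast
      then show "finite D" using finite_subset by blast
    qed
  qed (rule finF)
  also have "\<dots> = 4 * card F" using Fsub by simp
  finally show ?thesis .
qed

end

locale frame2 = frame +
  assumes veven: "even v"
begin

definition "hh = v div 2"

lemma hh: "0 < hh" "hh < v" "hh + hh = v"
  using vpos veven unfolding hh_def by auto

lemma mod_hh2: "t < v \<Longrightarrow> ((t + hh) mod v + hh) mod v = t"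
  using hh by (simp add: mod_simps add.assoc)

lemma mod_hh_ne: "t < v \<Longrightarrow> (t + hh) mod v \<noteq> t"
proof
  assume t: "t < v" and e: "(t + hh) mod v = t"
  have "(t + hh) mod v = (if t + hh < v then t + hh else t + hh - v)"
    using t hh by (simp add: mod_if le_mod_geq)
  then show False using e hh t by (auto split: if_splits)
qed

lemma shh_shh: "sh v hh (sh v hh p) = p" if "p \<in> P"
proof -
  have "snd p < v" using that mem_P by simp
  then show ?thesis unfolding sh_def using mod_hh2 by (simp add: prod_eq_iff)
qed

lemma shh_ne: "sh v hh p \<noteq> p" if "p \<in> P"
proof -
  have "snd p < v" using that mem_P by simp
  then show ?thesis unfolding sh_def using mod_hh_ne by (simp add: prod_eq_iff)
qed

definition "gg b = (fst b, (snd b + hh) mod v)"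

lemma gg_props:
  assumes "b \<in> Bl"
  shows "gg b \<in> Bl" "gg (gg b) = b" "gg b \<noteq> b" "blk (gg b) = sh v hh ` blk b"
proof -
  have t: "snd b < v" "fst b \<in> F" using assms unfolding Bl_def by (auto simp: mem_Times_iff)
  show "gg b \<in> Bl" using t vpos unfolding gg_def Bl_def by (simp add: mem_Times_iff)
  show "gg (gg b) = b" using mod_hh2[OF t(1)] unfolding gg_def by (simp add: prod_eq_iff)
  show "gg b \<noteq> b" using mod_hh_ne[OF t(1)] unfolding gg_def by (simp add: prod_eq_iff)
  show "blk (gg b) = sh v hh ` blk b" unfolding blk_def gg_def image_image sh_comp by simp
qed

lemma lam_even:
  assumes x: "x \<in> P"
  shows "even (lam {x, sh v hh x})"
  unfolding lam_def
proof (rule even_invol[where f = gg])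
  show "finite {b \<in> Bl. {x, sh v hh x} \<subseteq> blk b}" using finBl by simp
  fix b assume b: "b \<in> {b \<in> Bl. {x, sh v hh x} \<subseteq> blk b}"
  then have bB: "b \<in> Bl" by simp
  have "sh v hh x \<in> sh v hh ` blk b" "sh v hh (sh v hh x) \<in> sh v hh ` blk b" using b by auto
  then have "{x, sh v hh x} \<subseteq> blk (gg b)" using gg_props(4)[OF bB] shh_shh[OF x] by auto
  then show "gg b \<in> {b \<in> Bl. {x, sh v hh x} \<subseteq> blk b} \<and> gg b \<noteq> b \<and> gg (gg b) = b"
    using gg_props[OF bB] by simp
qed

lemma UU_closed:
  assumes T: "T \<in> UU"
  shows "sh v hh ` T \<in> UU"
proof -
  have TP: "T \<subseteq> P" "card T = 3" "T \<notin> cov" using T unfolding UU_def by auto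
  have inj: "inj_on (sh v hh) P" using sh_inj hh by simp
  have 1: "sh v hh ` T \<subseteq> P" using TP sh_P by blast
  have 2: "card (sh v hh ` T) = 3" using card_image[OF inj_on_subset[OF inj TP(1)]] TP by simp
  have bk: "sh v hh ` (sh v hh ` T) = T"
    unfolding image_image using TP(1) shh_shh by (auto simp: image_iff) (metis subsetD)
  have 3: "sh v hh ` T \<notin> cov"
  proof
    assume "sh v hh ` T \<in> cov"
    then obtain b where b: "b \<in> Bl" "sh v hh ` T \<subseteq> blk b" "card (sh v hh ` T) = 3" unfolding cov_def by blast
    have "T \<subseteq> blk (gg b)" using b(2) bk gg_props(4)[OF b(1)] by (metis image_mono)
    then have "T \<in> cov" unfolding cov_def using gg_props(1)[OF b(1)] TP by blast
    then show False using TP by simp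
  qed
  show ?thesis using 1 2 3 unfolding UU_def by simp
qed

lemma main_bound:
  assumes u12: "u mod 12 = 0"
  shows "12 * card F < u * (((u * v - 1) choose 2) - 4)"
proof -
  define n where "n = u * v"
  define N where "N = (n - 1) choose 2"
  obtain a where a: "u = 12 * a" using u12 by (auto simp: mod_eq_0_iff_dvd elim: dvdE)
  obtain b where b: "v = 2 * b" using veven by (auto elim: evenE)
  have ab: "a \<ge> 1" "b \<ge> 1" using a b upos vpos by auto
  have nab: "n = 24 * (a * b)" unfolding n_def using a b by simp
  have n4: "n mod 4 = 0" using nab by simp
  have n3: "3 dvd n" using nab by simp
  have "a * b \<ge> 1" using ab by simp
  then have nge: "n \<ge> 24" using nab by simp
  have N3: "N mod 3 = 1" unfolding N_def using N_mod3[OF n3] nge by simp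
  have lx: "card {T\<in>UU. {x} \<subseteq> T} + 3 * lam {x} = N" if x: "x \<in> P" for x
    using count_UU[of "{x}"] x unfolding N_def n_def by (simp add: c32)
  have l2: "card {T\<in>UU. {x} \<subseteq> T} \<ge> 2" if x: "x \<in> P" for x
  proof -
    have sx: "sh v hh x \<in> P" "sh v hh x \<noteq> x" using sh_P[OF x] shh_ne[OF x] by auto
    have c2: "card {x, sh v hh x} = 2" using sx by simp
    have "card {T\<in>UU. {x, sh v hh x} \<subseteq> T} + 2 * lam {x, sh v hh x} = n - 2"
      using count_UU[of "{x, sh v hh x}"] x sx c2 unfolding n_def by simp
    moreover obtain k where "lam {x, sh v hh x} = 2 * k" using lam_even[OF x] by blast
    ultimately have "card {T\<in>UU. {x, sh v hh x} \<subseteq> T} \<ge> 2" using n4 nge by presburger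
    moreover have "card {T\<in>UU. {x, sh v hh x} \<subseteq> T} \<le> card {T\<in>UU. {x} \<subseteq> T}"
    proof (rule card_mono)
      have "{T\<in>UU. {x} \<subseteq> T} \<subseteq> Pow P" unfolding UU_def by blast
      then show "finite {T\<in>UU. {x} \<subseteq> T}" using finP by (meson finite_Pow_iff finite_subset)
    qed blast
    ultimately show ?thesis by simp
  qed
  have lb: "3 * lam {x} + 4 \<le> N" and leq: "3 * lam {x} + 4 = N \<Longrightarrow> card {T\<in>UU. {x} \<subseteq> T} = 4"
    if x: "x \<in> P" for x
  proof -
    have a: "card {T\<in>UU. {x} \<subseteq> T} + 3 * lam {x} = N" using lx[OF x] .
    have b: "card {T\<in>UU. {x} \<subseteq> T} \<ge> 2" using l2[OF x] .
    show "3 * lam {x} + 4 \<le> N" using a b N3 by presburger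
    show "3 * lam {x} + 4 = N \<Longrightarrow> card {T\<in>UU. {x} \<subseteq> T} = 4" using a by simp
  qed
  show ?thesis
  proof (rule ccontr)
    assume neg: "\<not> ?thesis"
    have all4: "card {T\<in>UU. x \<in> T} = 4" if x: "x \<in> P" for x
    proof -
      obtain i c where ic: "x = (i,c)" "i < u" "c < v" using x mem_P by (metis prod.collapse)
      have sumeq: "(\<Sum>i<u. 3 * lam {(i,c)}) = 12 * card F" using rowsum[OF ic(3)] by (simp add: sum_distrib_left[symmetric])
      have "3 * lam {(i,c)} + 4 = N"
      proof (rule ccontr)
        assume "3 * lam {(i,c)} + 4 \<noteq> N"
        then have lt: "3 * lam {(i,c)} < N - 4" using lb[OF x] ic by simp
        have "(\<Sum>i<u. 3 * lam {(i,c)}) < (\<Sum>i<u. N - 4)"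
        proof (rule sum_strict_mono_ex1)
          show "\<forall>j\<in>{..<u}. 3 * lam {(j,c)} \<le> N - 4"
          proof
            fix j assume "j \<in> {..<u}"
            then have "(j,c) \<in> P" using ic mem_P by simp
            then show "3 * lam {(j,c)} \<le> N - 4" using lb by fastforce
          qed
          show "\<exists>j\<in>{..<u}. 3 * lam {(j,c)} < N - 4" using lt ic by blast
        qed simp
        then have "12 * card F < u * (N - 4)" using sumeq by simp
        then show False using neg unfolding N_def n_def by blast
      qed
      then have "card {T\<in>UU. {x} \<subseteq> T} = 4" using leq[OF x] ic by simp
      then show ?thesis by simp
    qed
    interpret oc: octa UU P "sh v hh"
    proof
      show "finite UU"
      proof -
        have "UU \<subseteq> Pow P" unfolding UU_def by blast
        then show ?thesis using finP by (meson finite_Pow_iff finite_subset)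
      qed
      show "\<And>T. T \<in> UU \<Longrightarrow> card T = 3 \<and> T \<subseteq> P" unfolding UU_def by blast
      show "\<And>x. x \<in> P \<Longrightarrow> sh v hh x \<in> P \<and> sh v hh (sh v hh x) = x \<and> sh v hh x \<noteq> x"
        using sh_P shh_shh shh_ne by blast
      show "\<And>T. T \<in> UU \<Longrightarrow> sh v hh ` T \<in> UU" by (rule UU_closed)
      show "\<And>x. x \<in> P \<Longrightarrow> card {T \<in> UU. x \<in> T} = 4" by (rule all4)
      show "even (card {T \<in> UU. x \<in> T \<and> y \<in> T})" if "x \<in> P" "y \<in> P" "x \<noteq> y" for x y
      proof -
        have "card {T\<in>UU. {x, y} \<subseteq> T} + 2 * lam {x, y} = n - 2"
          using count_UU[of "{x, y}"] that unfolding n_def by simp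
        moreover have "{T\<in>UU. {x, y} \<subseteq> T} = {T \<in> UU. x \<in> T \<and> y \<in> T}" by blast
        ultimately have "card {T \<in> UU. x \<in> T \<and> y \<in> T} + 2 * lam {x, y} = n - 2" by simp
        then show ?thesis using n4 nge by presburger
      qed
      show "{T \<in> UU. x \<in> T \<and> sh v hh x \<in> T} \<noteq> {}" if x: "x \<in> P" for x
      proof -
        have sx: "sh v hh x \<in> P" "sh v hh x \<noteq> x" using sh_P[OF x] shh_ne[OF x] by auto
        have "card {T\<in>UU. {x, sh v hh x} \<subseteq> T} + 2 * lam {x, sh v hh x} = n - 2"
          using count_UU[of "{x, sh v hh x}"] x sx unfolding n_def by simp
        moreover obtain k where "lam {x, sh v hh x} = 2 * k" using lam_even[OF x] by blast
        ultimately have "card {T\<in>UU. {x, sh v hh x} \<subseteq> T} \<noteq> 0" using n4 nge by presburger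
        moreover have "{T\<in>UU. {x, sh v hh x} \<subseteq> T} = {T \<in> UU. x \<in> T \<and> sh v hh x \<in> T}" by blast
        ultimately show ?thesis by (metis card.empty)
      qed
    qed
    have "(0,0) \<in> P" using upos vpos mem_P by simp
    then show False by (rule oc.contra)
  qed
qed
end



definition supp :: "(nat \<Rightarrow> nat \<Rightarrow> nat) \<Rightarrow> (nat \<times> nat) set" where
  "supp A = {p. A (fst p) (snd p) = 1}"

lemma supp_sub: "is01mat u v A \<Longrightarrow> supp A \<subseteq> {..<u} \<times> {..<v}"
proof
  fix p assume a: "is01mat u v A" and p: "p \<in> supp A"
  then have "A (fst p) (snd p) = 1" unfolding supp_def by simp
  then have "fst p < u" "snd p < v" using a unfolding is01mat_def by (metis not_le zero_neq_one)+
  then show "p \<in> {..<u} \<times> {..<v}" by (simp add: mem_Times_iff)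
qed

lemma sum01:
  assumes "finite X" "\<And>p. p \<in> X \<Longrightarrow> f p \<in> {0,1::nat}"
  shows "(\<Sum>p\<in>X. f p) = card {p\<in>X. f p = 1}"
proof -
  have "(\<Sum>p\<in>X. f p) = (\<Sum>p\<in>X. if f p = 1 then 1 else 0)"
    by (rule sum.cong) (use assms(2) in auto)
  also have "\<dots> = (\<Sum>p\<in>{p\<in>X. f p = 1}. 1)" by (rule sum.inter_filter[OF assms(1), symmetric])
  finally show ?thesis by (simp only: card_eq_sum)
qed

lemma hw:
  assumes "is01mat u v A"
  shows "hweight u v A = card (supp A)"
proof -
  have "hweight u v A = (\<Sum>p\<in>{..<u} \<times> {..<v}. A (fst p) (snd p))"
    unfolding hweight_def by (simp add: sum.cartesian_product case_prod_beta)
  also have "\<dots> = card {p\<in>{..<u} \<times> {..<v}. A (fst p) (snd p) = 1}"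
    by (rule sum01) (use assms in \<open>auto simp: is01mat_def\<close>)
  also have "{p\<in>{..<u} \<times> {..<v}. A (fst p) (snd p) = 1} = supp A"
    using supp_sub[OF assms] unfolding supp_def by blast
  finally show ?thesis .
qed

lemma mult01: "x \<in> {0,1} \<Longrightarrow> y \<in> {0,1} \<Longrightarrow> (x * y = (1::nat)) = (x = 1 \<and> y = 1)" by auto

lemma corr_eq:
  assumes "is01mat u v A" "is01mat u v B"
  shows "corr u v A B r = card {p\<in>supp A. (fst p, nat ((int (snd p) + r) mod int v)) \<in> supp B}"
proof -
  let ?f = "\<lambda>p. A (fst p) (snd p) * B (fst p) (nat ((int (snd p) + r) mod int v))"
  have "corr u v A B r = (\<Sum>p\<in>{..<u} \<times> {..<v}. ?f p)"
    unfolding corr_def by (simp add: sum.cartesian_product case_prod_beta)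
  also have "\<dots> = card {p\<in>{..<u} \<times> {..<v}. ?f p = 1}"
  proof (rule sum01)
    fix p
    have 1: "A (fst p) (snd p) \<in> {0,1}" "B (fst p) (nat ((int (snd p) + r) mod int v)) \<in> {0,1}"
      using assms unfolding is01mat_def by auto
    then show "?f p \<in> {0,1}" by auto
  qed simp
  also have "{p\<in>{..<u} \<times> {..<v}. ?f p = 1} = {p\<in>supp A. (fst p, nat ((int (snd p) + r) mod int v)) \<in> supp B}"
  proof (rule set_eqI)
    fix p
    have 1: "A (fst p) (snd p) \<in> {0,1}" "B (fst p) (nat ((int (snd p) + r) mod int v)) \<in> {0,1}"
      using assms unfolding is01mat_def by auto
    show "p \<in> {p\<in>{..<u} \<times> {..<v}. ?f p = 1} \<longleftrightarrow> p \<in> {p\<in>supp A. (fst p, nat ((int (snd p) + r) mod int v)) \<in> supp B}"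
      using supp_sub[OF assms(1)] mult01[OF 1] unfolding supp_def by auto
  qed
  finally show ?thesis .
qed

lemma inj_supp:
  assumes "is01mat u v A" "is01mat u v B" "supp A = supp B"
  shows "A = B"
proof (intro ext)
  fix i j
  have "A i j \<in> {0,1}" "B i j \<in> {0,1}" using assms unfolding is01mat_def by auto
  moreover have "((i,j) \<in> supp A) = ((i,j) \<in> supp B)" using assms(3) by simp
  then have "(A i j = 1) = (B i j = 1)" unfolding supp_def by simp
  ultimately show "A i j = B i j" by auto
qed

lemma modint:
  fixes j k s t v :: nat
  assumes "k < v" "v > 0"
  shows "((j + s) mod v = (k + t) mod v) = (k = nat ((int j + (int s - int t)) mod int v))"
proof -
  have e1: "((j + s) mod v = (k + t) mod v) = ((int j + int s) mod int v = (int k + int t) mod int v)"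
    by (simp only: of_nat_add[symmetric] zmod_int[symmetric] of_nat_eq_iff)
  have e2: "((int j + int s) mod int v = (int k + int t) mod int v) = ((int j + int s - int t) mod int v = int k mod int v)"
  proof
    assume "(int j + int s) mod int v = (int k + int t) mod int v"
    then have "(int j + int s - int t) mod int v = (int k + int t - int t) mod int v"
      by (rule mod_diff_cong) simp
    then show "(int j + int s - int t) mod int v = int k mod int v" by simp
  next
    assume "(int j + int s - int t) mod int v = int k mod int v"
    then have "(int j + int s - int t + int t) mod int v = (int k + int t) mod int v"
      by (rule mod_add_cong) simp
    then show "(int j + int s) mod int v = (int k + int t) mod int v" by simp
  qed
  have e3: "int k mod int v = int k" using assms by simp
  have nn: "0 \<le> (int j + (int s - int t)) mod int v" using assms by simp
  have e4: "((int j + int s - int t) mod int v = int k) = (k = nat ((int j + (int s - int t)) mod int v))"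
  proof -
    have "int j + int s - int t = int j + (int s - int t)" by simp
    then show ?thesis using nn by (metis nat_int int_nat_eq)
  qed
  show ?thesis using e1 e2 e3 e4 by simp
qed


lemma sh_inj0: assumes "s < v" shows "inj_on (sh v s) ({..<u} \<times> {..<v})"
proof
  fix p q assume p: "p \<in> {..<u} \<times> {..<v}" and q: "q \<in> {..<u} \<times> {..<v}" and e: "sh v s p = sh v s q"
  have lt: "snd p < v" "snd q < v" using p q by (auto simp: mem_Times_iff)
  have "(snd p + s) mod v = (snd q + s) mod v" using e unfolding sh_def by simp
  then have "snd q = nat ((int (snd p) + (int s - int s)) mod int v)" using modint[OF lt(2)] lt by simp
  then have "snd q = snd p" using lt by simp
  moreover have "fst p = fst q" using e unfolding sh_def by simp
  ultimately show "p = q" by (simp add: prod_eq_iff)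
qed

lemma ooc_frame:
  assumes C: "is_OOC u v C" and upos: "u > 0" and v: "v mod 6 = 2 \<or> v mod 6 = 4"
  shows "frame2 u v (supp ` C)"
proof -
  have vpos: "v > 0" using v by auto
  have veven: "even v" using v by presburger
  have Cs: "\<And>A. A \<in> C \<Longrightarrow> is01mat u v A \<and> hweight u v A = 4" using C unfolding is_OOC_def by blast
  have Cc: "\<And>A B r. A \<in> C \<Longrightarrow> B \<in> C \<Longrightarrow> A \<noteq> B \<or> \<not> (r mod int v = 0) \<Longrightarrow> corr u v A B r \<le> 2"
    using C unfolding is_OOC_def by blast
  show ?thesis
  proof (unfold_locales)
    show "0 < v" by (rule vpos)
    show "0 < u" by (rule upos)
    show "even v" by (rule veven)
    fix D assume "D \<in> supp ` C"
    then obtain A where A: "A \<in> C" "D = supp A" by blast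
    show "D \<subseteq> {..<u} \<times> {..<v} \<and> card D = 4" using A Cs[OF A(1)] supp_sub hw by metis
  next
    fix D E s t assume DE: "D \<in> supp ` C" "E \<in> supp ` C" and st: "s < v" "t < v" and ne: "D \<noteq> E \<or> s \<noteq> t"
    obtain A where A: "A \<in> C" "D = supp A" using DE by blast
    obtain B where B: "B \<in> C" "E = supp B" using DE by blast
    have A01: "is01mat u v A" and B01: "is01mat u v B" using Cs A(1) B(1) by auto
    have DP: "D \<subseteq> {..<u} \<times> {..<v}" and EP: "E \<subseteq> {..<u} \<times> {..<v}"
      using supp_sub A01 B01 A B by auto
    define r where "r = int s - int t"
    define X where "X = {p\<in>D. (fst p, nat ((int (snd p) + r) mod int v)) \<in> E}"
    have eq: "sh v s ` D \<inter> sh v t ` E = sh v s ` X"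
    proof
      show "sh v s ` D \<inter> sh v t ` E \<subseteq> sh v s ` X"
      proof
        fix z assume "z \<in> sh v s ` D \<inter> sh v t ` E"
        then obtain p q where pq: "p \<in> D" "q \<in> E" "z = sh v s p" "z = sh v t q" by blast
        have qv: "snd q < v" using pq EP by (auto simp: mem_Times_iff)
        have "(snd p + s) mod v = (snd q + t) mod v" "fst p = fst q" using pq unfolding sh_def by auto
        then have "snd q = nat ((int (snd p) + r) mod int v)" "fst p = fst q"
          using modint[OF qv vpos] unfolding r_def by auto
        then have "(fst p, nat ((int (snd p) + r) mod int v)) = q" by (simp add: prod_eq_iff)
        then have "p \<in> X" unfolding X_def using pq by simp
        then show "z \<in> sh v s ` X" using pq by blast
      qed
      show "sh v s ` X \<subseteq> sh v s ` D \<inter> sh v t ` E"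
      proof
        fix z assume "z \<in> sh v s ` X"
        then obtain p where p: "p \<in> D" "(fst p, nat ((int (snd p) + r) mod int v)) \<in> E" "z = sh v s p"
          unfolding X_def by blast
        define q where "q = (fst p, nat ((int (snd p) + r) mod int v))"
        have qv: "snd q < v" using p(2) EP q_def by (auto simp: mem_Times_iff)
        have "(snd p + s) mod v = (snd q + t) mod v"
          using modint[OF qv vpos, of "snd p" s t] unfolding q_def r_def by simp
        then have "sh v s p = sh v t q" unfolding sh_def q_def by simp
        moreover have "q \<in> E" using p(2) q_def by simp
        ultimately show "z \<in> sh v s ` D \<inter> sh v t ` E" using p(1,3) by (metis IntI image_eqI)
      qed
    qed
    have XD: "X \<subseteq> {..<u} \<times> {..<v}" using DP X_def by auto
    have "card (sh v s ` X) = card X" using card_image[OF inj_on_subset[OF sh_inj0[OF st(1)] XD]] .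
    also have "card X = corr u v A B r" unfolding X_def using corr_eq[OF A01 B01, of r] A(2) B(2) by simp
    also have "\<dots> \<le> 2"
    proof (rule Cc[OF A(1) B(1)])
      show "A \<noteq> B \<or> \<not> (r mod int v = 0)"
      proof (cases "D = E")
        case False then show ?thesis using A B by auto
      next
        case True
        then have "s \<noteq> t" using ne by simp
        then have rne: "r \<noteq> 0" unfolding r_def by simp
        have "\<bar>r\<bar> < int v" unfolding r_def using st by auto
        moreover have "int v dvd r \<Longrightarrow> \<bar>int v\<bar> \<le> \<bar>r\<bar>" using dvd_imp_le_int[OF rne] by blast
        ultimately have "\<not> int v dvd r" by linarith
        then show ?thesis by (simp add: dvd_eq_mod_eq_0)
      qed
    qed
    finally show "card (sh v s ` D \<inter> sh v t ` E) \<le> 2" using eq by simp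
  qed
qed



lemma ooc_card:
  assumes C: "is_OOC u v C" and upos: "u > 0" and u12: "u mod 12 = 0" and v: "v mod 6 = 2 \<or> v mod 6 = 4"
  shows "12 * card C < u * (((u * v - 1) choose 2) - 4)"
proof -
  interpret fr: frame2 u v "supp ` C" by (rule ooc_frame[OF C upos v])
  have "inj_on supp C"
  proof
    fix A B assume "A \<in> C" "B \<in> C" "supp A = supp B"
    then show "A = B" using inj_supp C unfolding is_OOC_def by blast
  qed
  then have "card (supp ` C) = card C" by (rule card_image)
  then show ?thesis using fr.main_bound[OF u12] by simp
qed

theorem lemma5p2:
  fixes u v :: nat
  assumes "u > 0" and "u mod 12 = 0" and "v mod 6 = 2 \<or> v mod 6 = 4"
  shows "int (Phi u v) \<le>
    \<lfloor> real u / 4 * (real_of_int \<lfloor> (real (u * v) - 1) / 3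
        * real_of_int \<lfloor> (real (u * v) - 2) / 2 \<rfloor> \<rfloor> - 1) \<rfloor> - 1"
proof -
  define n where "n = u * v"
  define N where "N = (n - 1) choose 2"
  obtain a where a: "u = 12 * a" using assms(2) by (auto simp: mod_eq_0_iff_dvd elim: dvdE)
  have veven: "even v" using assms(3) by presburger
  obtain b where b: "v = 2 * b" using veven by (auto elim: evenE)
  have ab: "a \<ge> 1" "b \<ge> 1" using a b assms(1,3) by auto
  have nab: "n = 24 * (a * b)" unfolding n_def using a b by simp
  have "a * b \<ge> 1" using ab by simp
  then have nge: "n \<ge> 24" using nab by simp
  have n3: "3 dvd n" using nab by simp
  define m where "m = 12 * (a * b) - 1"
  have aux: "\<And>p::nat. p \<ge> 1 \<Longrightarrow> 24*p - 2 = 2*(12*p-1) \<and> 24*p = 2*(12*p-1)+2" by auto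
  have nm: "n - 2 = 2 * m" "n = 2 * m + 2" unfolding m_def nab using aux[OF \<open>a * b \<ge> 1\<close>] by auto
  have NN: "N = (n - 1) * m"
  proof -
    have "N = (n - 1) * (n - 1 - 1) div 2" unfolding N_def by (simp add: choose_two)
    also have "n - 1 - 1 = 2 * m" using nm by simp
    finally show ?thesis by simp
  qed
  have N3: "N mod 3 = 1" unfolding N_def using N_mod3[OF n3] nge by simp
  define K where "K = N div 3"
  have NK: "N = 3 * K + 1" using N3 K_def div_mult_mod_eq[of N 3] by simp
  have Nge: "N \<ge> 4"
  proof -
    have aux2: "\<And>p::nat. p \<ge> 1 \<Longrightarrow> 12*p - 1 \<ge> 11" by auto
    have "m \<ge> 11" unfolding m_def using aux2[OF \<open>a * b \<ge> 1\<close>] .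
    moreover have "n - 1 \<ge> 23" using nge by simp
    ultimately have "(n - 1) * m \<ge> 23 * 11" using mult_le_mono by blast
    then show ?thesis using NN by simp
  qed
  then have K1: "K \<ge> 1" using NK by simp
  have bnd: "card C < 3 * a * (K - 1)" if C: "is_OOC u v C" for C
  proof -
    have "12 * card C < u * (N - 4)" using ooc_card[OF C assms] unfolding N_def n_def .
    also have "u * (N - 4) = 12 * (3 * a * (K - 1))" using a NK K1 by (simp add: algebra_simps)
    finally show ?thesis by simp
  qed
  have empty: "is_OOC u v {}" unfolding is_OOC_def by simp
  have S: "{card C | C. is_OOC u v C} \<subseteq> {..<3 * a * (K - 1)}" using bnd by auto
  have fin: "finite {card C | C. is_OOC u v C}" using S finite_subset by blast
  have ne: "{card C | C. is_OOC u v C} \<noteq> {}" using empty by blast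
  have Phi_lt: "Phi u v < 3 * a * (K - 1)"
    unfolding Phi_def using Max_in[OF fin ne] S by blast
  have f1: "\<lfloor>(real (u * v) - 2) / 2\<rfloor> = int m"
  proof -
    have "real (u * v) - 2 = real (n - 2)" unfolding n_def using nge n_def by (simp add: of_nat_diff)
    then have "(real (u * v) - 2) / 2 = real m" using nm by simp
    then show ?thesis by simp
  qed
  have f2: "\<lfloor>(real (u * v) - 1) / 3 * real_of_int (int m)\<rfloor> = int K"
  proof -
    have "real (n - 1) = real n - real 1" using nge by (intro of_nat_diff) simp
    then have "real (u * v) - 1 = real (n - 1)" unfolding n_def by simp
    then have "(real (u * v) - 1) / 3 * real_of_int (int m) = real ((n - 1) * m) / real 3" by simp
    also have "(n - 1) * m = N" using NN by simp
    finally have "\<lfloor>(real (u * v) - 1) / 3 * real_of_int (int m)\<rfloor> = \<lfloor>real N / real 3\<rfloor>" by simp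
    also have "\<dots> = int (N div 3)" by (rule floor_divide_of_nat_eq)
    finally show ?thesis unfolding K_def .
  qed
  have f3: "real u / 4 * (real_of_int (int K) - 1) = real (3 * a * (K - 1))"
    using a K1 by (simp add: of_nat_diff)
  have hR: "\<lfloor> real u / 4 * (real_of_int \<lfloor> (real (u * v) - 1) / 3
        * real_of_int \<lfloor> (real (u * v) - 2) / 2 \<rfloor> \<rfloor> - 1) \<rfloor> = int (3 * a * (K - 1))"
    unfolding f1 f2 f3 by (rule floor_of_nat)
  have "int (Phi u v) < int (3 * a * (K - 1))" using Phi_lt by (simp only: of_nat_less_iff)
  then have "int (Phi u v) \<le> int (3 * a * (K - 1)) - 1" by linarith
  then show ?thesis unfolding hR .
qed


end
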